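(* Let $(\mathcal A;\mathcal E)$ be an exact category with exact coproducts. Then the coproduct, in the arrow category with its exact structure $\mathrm{Arr}(\mathcal E)$, of any set of ME-conflations of arrows is an ME-conflation.
   Context: An exact category $(\mathcal A;\mathcal E)$ is an additive category with a class of conflations satisfying the Quillen–Keller axioms; it has exact coproducts if set-indexed coproducts exist and coproducts of conflations are conflations. The arrow category $\mathrm{Arr}(\mathcal A)$ has as objects the morphisms $a:A_0\to A_1$ of $\mathcal A$ and as morphisms $a\to b$ the pairs $(f_0,f_1)$ with $bf_0=f_1a$. Its exact structure $\mathrm{Arr}(\mathcal E)$ consists of the sequences $b\to c\to a$ given by a morphism of conflations from $B_0\to C_0\to A_0$ to $B_1\to C_1\to A_1$ with vertical components $b,c,a$. Such a conflation of arrows is ME (mono-epi) if there is a conflation $B_0\to C\to A_1$ and a factorization $c=c_2c_1$ such that $(1_{B_0},c_1,a)$ is a morphism of conflations from $B_0\to C_0\to A_0$ to $B_0\to C\to A_1$ and $(b,c_2,1_{A_1})$ is a morphism of conflations from $B_0\to C\to A_1$ to $B_1\to C_1\to A_1$. *)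

theory Defs
  imports Main
begin

text \<open>Cmp g f is the composite "g after f". Pls, Zro, Ngt give the abelian group
  structure on hom-sets (Zro a b is the zero morphism a to b).\<close>

record ('o, 'm) addcat =
  Obj :: "'o set"
  Mor :: "'m set"
  Src :: "'m \<Rightarrow> 'o"
  Tgt :: "'m \<Rightarrow> 'o"
  Idn :: "'o \<Rightarrow> 'm"
  Cmp :: "'m \<Rightarrow> 'm \<Rightarrow> 'm"
  Pls :: "'m \<Rightarrow> 'm \<Rightarrow> 'm"
  Zro :: "'o \<Rightarrow> 'o \<Rightarrow> 'm"
  Ngt :: "'m \<Rightarrow> 'm"

definition hom :: "('o, 'm, 'x) addcat_scheme \<Rightarrow> 'o \<Rightarrow> 'o \<Rightarrow> 'm set" where
  "hom C a b = {f \<in> Mor C. Src C f = a \<and> Tgt C f = b}"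

definition is_category :: "('o, 'm, 'x) addcat_scheme \<Rightarrow> bool" where
  "is_category C \<longleftrightarrow>
     (\<forall>f \<in> Mor C. Src C f \<in> Obj C \<and> Tgt C f \<in> Obj C) \<and>
     (\<forall>a \<in> Obj C. Idn C a \<in> hom C a a) \<and>
     (\<forall>f \<in> Mor C. \<forall>g \<in> Mor C. Tgt C f = Src C g \<longrightarrow>
        Cmp C g f \<in> hom C (Src C f) (Tgt C g)) \<and>
     (\<forall>f \<in> Mor C. Cmp C (Idn C (Tgt C f)) f = f \<and> Cmp C f (Idn C (Src C f)) = f) \<and>
     (\<forall>f \<in> Mor C. \<forall>g \<in> Mor C. \<forall>h \<in> Mor C.
        Tgt C f = Src C g \<longrightarrow> Tgt C g = Src C h \<longrightarrow>
        Cmp C h (Cmp C g f) = Cmp C (Cmp C h g) f)"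

definition is_preadditive :: "('o, 'm, 'x) addcat_scheme \<Rightarrow> bool" where
  "is_preadditive C \<longleftrightarrow> is_category C \<and>
     (\<forall>a \<in> Obj C. \<forall>b \<in> Obj C.
        Zro C a b \<in> hom C a b \<and>
        (\<forall>f \<in> hom C a b. \<forall>g \<in> hom C a b. Pls C f g \<in> hom C a b) \<and>
        (\<forall>f \<in> hom C a b. Ngt C f \<in> hom C a b) \<and>
        (\<forall>f \<in> hom C a b. \<forall>g \<in> hom C a b. \<forall>h \<in> hom C a b.
           Pls C (Pls C f g) h = Pls C f (Pls C g h)) \<and>
        (\<forall>f \<in> hom C a b. \<forall>g \<in> hom C a b. Pls C f g = Pls C g f) \<and>
        (\<forall>f \<in> hom C a b. Pls C f (Zro C a b) = f) \<and>
        (\<forall>f \<in> hom C a b. Pls C f (Ngt C f) = Zro C a b)) \<and>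
     (\<forall>a \<in> Obj C. \<forall>b \<in> Obj C. \<forall>c \<in> Obj C.
        (\<forall>f \<in> hom C a b. \<forall>g \<in> hom C a b. \<forall>h \<in> hom C b c.
           Cmp C h (Pls C f g) = Pls C (Cmp C h f) (Cmp C h g)) \<and>
        (\<forall>f \<in> hom C a b. \<forall>g \<in> hom C b c. \<forall>h \<in> hom C b c.
           Cmp C (Pls C g h) f = Pls C (Cmp C g f) (Cmp C h f)))"

definition is_additive :: "('o, 'm, 'x) addcat_scheme \<Rightarrow> bool" where
  "is_additive C \<longleftrightarrow> is_preadditive C \<and>
     (\<exists>z \<in> Obj C. Idn C z = Zro C z z) \<and>
     (\<forall>a \<in> Obj C. \<forall>b \<in> Obj C. \<exists>p \<in> Obj C. \<exists>i1 i2 p1 p2.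
        i1 \<in> hom C a p \<and> i2 \<in> hom C b p \<and> p1 \<in> hom C p a \<and> p2 \<in> hom C p b \<and>
        Cmp C p1 i1 = Idn C a \<and> Cmp C p2 i2 = Idn C b \<and>
        Cmp C p2 i1 = Zro C a b \<and> Cmp C p1 i2 = Zro C b a \<and>
        Pls C (Cmp C i1 p1) (Cmp C i2 p2) = Idn C p)"

definition is_iso :: "('o, 'm, 'x) addcat_scheme \<Rightarrow> 'm \<Rightarrow> bool" where
  "is_iso C f \<longleftrightarrow> f \<in> Mor C \<and> (\<exists>g \<in> hom C (Tgt C f) (Src C f).
      Cmp C g f = Idn C (Src C f) \<and> Cmp C f g = Idn C (Tgt C f))"

definition is_kernel :: "('o, 'm, 'x) addcat_scheme \<Rightarrow> 'm \<Rightarrow> 'm \<Rightarrow> bool" where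
  "is_kernel C i d \<longleftrightarrow> i \<in> Mor C \<and> d \<in> Mor C \<and> Tgt C i = Src C d \<and>
     Cmp C d i = Zro C (Src C i) (Tgt C d) \<and>
     (\<forall>x \<in> Obj C. \<forall>f \<in> hom C x (Src C d). Cmp C d f = Zro C x (Tgt C d) \<longrightarrow>
        (\<exists>!g. g \<in> hom C x (Src C i) \<and> Cmp C i g = f))"

definition is_cokernel :: "('o, 'm, 'x) addcat_scheme \<Rightarrow> 'm \<Rightarrow> 'm \<Rightarrow> bool" where
  "is_cokernel C d i \<longleftrightarrow> i \<in> Mor C \<and> d \<in> Mor C \<and> Tgt C i = Src C d \<and>
     Cmp C d i = Zro C (Src C i) (Tgt C d) \<and>
     (\<forall>y \<in> Obj C. \<forall>f \<in> hom C (Tgt C i) y. Cmp C f i = Zro C (Src C i) y \<longrightarrow>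
        (\<exists>!g. g \<in> hom C (Tgt C d) y \<and> Cmp C g d = f))"

definition is_kernel_cokernel_pair :: "('o, 'm, 'x) addcat_scheme \<Rightarrow> 'm \<Rightarrow> 'm \<Rightarrow> bool" where
  "is_kernel_cokernel_pair C i d \<longleftrightarrow> is_kernel C i d \<and> is_cokernel C d i"

text \<open>Commutative square  g' after f = f' after g  (f : A -> B, g : A -> C,
  f' : C -> P, g' : B -> P) that is a pushout.\<close>

definition is_pushout :: "('o, 'm, 'x) addcat_scheme \<Rightarrow> 'm \<Rightarrow> 'm \<Rightarrow> 'm \<Rightarrow> 'm \<Rightarrow> bool" where
  "is_pushout C f g f' g' \<longleftrightarrow>
     f \<in> Mor C \<and> g \<in> Mor C \<and> f' \<in> Mor C \<and> g' \<in> Mor C \<and>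
     Src C f = Src C g \<and> Src C f' = Tgt C g \<and> Src C g' = Tgt C f \<and> Tgt C f' = Tgt C g' \<and>
     Cmp C g' f = Cmp C f' g \<and>
     (\<forall>x \<in> Obj C. \<forall>h \<in> hom C (Tgt C f) x. \<forall>k \<in> hom C (Tgt C g) x.
        Cmp C h f = Cmp C k g \<longrightarrow>
        (\<exists>!u. u \<in> hom C (Tgt C f') x \<and> Cmp C u g' = h \<and> Cmp C u f' = k))"

text \<open>Commutative square  f after g' = g after f'  (f : B -> D, g : C -> D,
  f' : P -> C, g' : P -> B) that is a pullback.\<close>

definition is_pullback :: "('o, 'm, 'x) addcat_scheme \<Rightarrow> 'm \<Rightarrow> 'm \<Rightarrow> 'm \<Rightarrow> 'm \<Rightarrow> bool" where
  "is_pullback C f g f' g' \<longleftrightarrow>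
     f \<in> Mor C \<and> g \<in> Mor C \<and> f' \<in> Mor C \<and> g' \<in> Mor C \<and>
     Tgt C f = Tgt C g \<and> Tgt C f' = Src C g \<and> Tgt C g' = Src C f \<and> Src C f' = Src C g' \<and>
     Cmp C f g' = Cmp C g f' \<and>
     (\<forall>x \<in> Obj C. \<forall>h \<in> hom C x (Src C f). \<forall>k \<in> hom C x (Src C g).
        Cmp C f h = Cmp C g k \<longrightarrow>
        (\<exists>!u. u \<in> hom C x (Src C f') \<and> Cmp C g' u = h \<and> Cmp C f' u = k))"

section \<open>Exact categories (Quillen--Keller axioms, as in Buehler)\<close>

definition inflation :: "('o, 'm, 'x) addcat_scheme \<Rightarrow> ('m \<times> 'm) set \<Rightarrow> 'm \<Rightarrow> bool" where
  "inflation C E i \<longleftrightarrow> (\<exists>d. (i, d) \<in> E)"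

definition deflation :: "('o, 'm, 'x) addcat_scheme \<Rightarrow> ('m \<times> 'm) set \<Rightarrow> 'm \<Rightarrow> bool" where
  "deflation C E d \<longleftrightarrow> (\<exists>i. (i, d) \<in> E)"

text \<open>Morphism of sequences (f, g, h) from  A -i-> B -d-> C  to  A' -i'-> B' -d'-> C'.\<close>

definition seq_morphism ::
  "('o, 'm, 'x) addcat_scheme \<Rightarrow> 'm \<times> 'm \<Rightarrow> 'm \<times> 'm \<Rightarrow> 'm \<Rightarrow> 'm \<Rightarrow> 'm \<Rightarrow> bool" where
  "seq_morphism C s s' f g h \<longleftrightarrow>
     (case s of (i, d) \<Rightarrow> case s' of (i', d') \<Rightarrow>
       f \<in> hom C (Src C i) (Src C i') \<and> g \<in> hom C (Tgt C i) (Tgt C i') \<and>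
       h \<in> hom C (Tgt C d) (Tgt C d') \<and>
       Cmp C i' f = Cmp C g i \<and> Cmp C d' g = Cmp C h d)"

definition is_exact_category :: "('o, 'm, 'x) addcat_scheme \<Rightarrow> ('m \<times> 'm) set \<Rightarrow> bool" where
  "is_exact_category C E \<longleftrightarrow> is_additive C \<and>
     \<comment> \<open>conflations are kernel-cokernel pairs\<close>
     (\<forall>(i, d) \<in> E. is_kernel_cokernel_pair C i d) \<and>
     \<comment> \<open>closed under isomorphisms of kernel-cokernel pairs\<close>
     (\<forall>i d i' d' f g h. (i, d) \<in> E \<longrightarrow> is_kernel_cokernel_pair C i' d' \<longrightarrow>
        seq_morphism C (i, d) (i', d') f g h \<longrightarrow> is_iso C f \<longrightarrow> is_iso C g \<longrightarrow> is_iso C h \<longrightarrow>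
        (i', d') \<in> E) \<and>
     \<comment> \<open>[E0], [E0op]\<close>
     (\<forall>a \<in> Obj C. deflation C E (Idn C a)) \<and>
     (\<forall>a \<in> Obj C. inflation C E (Idn C a)) \<and>
     \<comment> \<open>[E1], [E1op]\<close>
     (\<forall>p q. deflation C E p \<longrightarrow> deflation C E q \<longrightarrow> Tgt C p = Src C q \<longrightarrow>
        deflation C E (Cmp C q p)) \<and>
     (\<forall>i j. inflation C E i \<longrightarrow> inflation C E j \<longrightarrow> Tgt C i = Src C j \<longrightarrow>
        inflation C E (Cmp C j i)) \<and>
     \<comment> \<open>[E2]: pushouts of inflations along arbitrary morphisms exist and are inflations\<close>
     (\<forall>i g. inflation C E i \<longrightarrow> g \<in> Mor C \<longrightarrow> Src C g = Src C i \<longrightarrow>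
        (\<exists>i' g'. is_pushout C i g i' g' \<and> inflation C E i')) \<and>
     \<comment> \<open>[E2op]: pullbacks of deflations along arbitrary morphisms exist and are deflations\<close>
     (\<forall>p g. deflation C E p \<longrightarrow> g \<in> Mor C \<longrightarrow> Tgt C g = Tgt C p \<longrightarrow>
        (\<exists>p' g'. is_pullback C p g p' g' \<and> deflation C E p'))"

definition is_coproduct ::
  "('o, 'm, 'x) addcat_scheme \<Rightarrow> 'i set \<Rightarrow> ('i \<Rightarrow> 'o) \<Rightarrow> 'o \<Rightarrow> ('i \<Rightarrow> 'm) \<Rightarrow> bool" where
  "is_coproduct C I A S \<iota> \<longleftrightarrow> S \<in> Obj C \<and> (\<forall>k \<in> I. \<iota> k \<in> hom C (A k) S) \<and>
     (\<forall>x \<in> Obj C. \<forall>f. (\<forall>k \<in> I. f k \<in> hom C (A k) x) \<longrightarrow>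
        (\<exists>!g. g \<in> hom C S x \<and> (\<forall>k \<in> I. Cmp C g (\<iota> k) = f k)))"

text \<open>(U, V) : SB -> SC -> SA is the coproduct of the family of sequences
  (u k, v k), computed with the coproducts (SB, iB), (SC, iC), (SA, iA).\<close>

definition is_coproduct_of_seqs ::
  "('o, 'm, 'x) addcat_scheme \<Rightarrow> 'i set \<Rightarrow> ('i \<Rightarrow> 'm) \<Rightarrow> ('i \<Rightarrow> 'm) \<Rightarrow>
   'o \<Rightarrow> ('i \<Rightarrow> 'm) \<Rightarrow> 'o \<Rightarrow> ('i \<Rightarrow> 'm) \<Rightarrow> 'o \<Rightarrow> ('i \<Rightarrow> 'm) \<Rightarrow> 'm \<Rightarrow> 'm \<Rightarrow> bool" where
  "is_coproduct_of_seqs C I u v SB iB SC iC SA iA U V \<longleftrightarrow>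
     (\<forall>k \<in> I. u k \<in> Mor C \<and> v k \<in> Mor C \<and> Tgt C (u k) = Src C (v k)) \<and>
     is_coproduct C I (\<lambda>k. Src C (u k)) SB iB \<and>
     is_coproduct C I (\<lambda>k. Tgt C (u k)) SC iC \<and>
     is_coproduct C I (\<lambda>k. Tgt C (v k)) SA iA \<and>
     U \<in> hom C SB SC \<and> V \<in> hom C SC SA \<and>
     (\<forall>k \<in> I. Cmp C U (iB k) = Cmp C (iC k) (u k) \<and> Cmp C V (iC k) = Cmp C (iA k) (v k))"

text \<open>Exact coproducts, for families indexed by subsets of the type 'i:
  all such coproducts exist and coproducts of conflations are conflations.\<close>

definition has_exact_coproducts ::
  "('o, 'm, 'x) addcat_scheme \<Rightarrow> ('m \<times> 'm) set \<Rightarrow> 'i itself \<Rightarrow> bool" where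
  "has_exact_coproducts C E (_ :: 'i itself) \<longleftrightarrow>
     (\<forall>(I :: 'i set) A. (\<forall>k \<in> I. A k \<in> Obj C) \<longrightarrow> (\<exists>S \<iota>. is_coproduct C I A S \<iota>)) \<and>
     (\<forall>(I :: 'i set) u v SB iB SC iC SA iA U V.
        (\<forall>k \<in> I. (u k, v k) \<in> E) \<longrightarrow>
        is_coproduct_of_seqs C I u v SB iB SC iC SA iA U V \<longrightarrow> (U, V) \<in> E)"

section \<open>The arrow category\<close>

text \<open>Objects of Arr(C) are morphisms of C. A morphism a -> b of Arr(C) is encoded
  as the quadruple (a, b, f0, f1) with  b f0 = f1 a.\<close>

type_synonym 'm arrmor = "'m \<times> 'm \<times> 'm \<times> 'm"

definition arr_src :: "'m arrmor \<Rightarrow> 'm" where "arr_src u = fst u"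
definition arr_tgt :: "'m arrmor \<Rightarrow> 'm" where "arr_tgt u = fst (snd u)"
definition arr_c0 :: "'m arrmor \<Rightarrow> 'm" where "arr_c0 u = fst (snd (snd u))"
definition arr_c1 :: "'m arrmor \<Rightarrow> 'm" where "arr_c1 u = snd (snd (snd u))"

definition Arr :: "('o, 'm, 'x) addcat_scheme \<Rightarrow> ('m, 'm arrmor) addcat" where
  "Arr C = \<lparr>
     Obj = Mor C,
     Mor = {(a, b, f0, f1). a \<in> Mor C \<and> b \<in> Mor C \<and>
              f0 \<in> hom C (Src C a) (Src C b) \<and> f1 \<in> hom C (Tgt C a) (Tgt C b) \<and>
              Cmp C b f0 = Cmp C f1 a},
     Src = arr_src,
     Tgt = arr_tgt,
     Idn = (\<lambda>a. (a, a, Idn C (Src C a), Idn C (Tgt C a))),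
     Cmp = (\<lambda>v u. (arr_src u, arr_tgt v, Cmp C (arr_c0 v) (arr_c0 u), Cmp C (arr_c1 v) (arr_c1 u))),
     Pls = (\<lambda>u v. (arr_src u, arr_tgt u, Pls C (arr_c0 u) (arr_c0 v), Pls C (arr_c1 u) (arr_c1 v))),
     Zro = (\<lambda>a b. (a, b, Zro C (Src C a) (Src C b), Zro C (Tgt C a) (Tgt C b))),
     Ngt = (\<lambda>u. (arr_src u, arr_tgt u, Ngt C (arr_c0 u), Ngt C (arr_c1 u))) \<rparr>"

text \<open>The exact structure Arr(E): sequences b -> c -> a in Arr(C) which are morphisms
  of conflations from B0 -> C0 -> A0 to B1 -> C1 -> A1.\<close>

definition ArrE :: "('o, 'm, 'x) addcat_scheme \<Rightarrow> ('m \<times> 'm) set \<Rightarrow> ('m arrmor \<times> 'm arrmor) set" where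
  "ArrE C E = {(u, v). u \<in> Mor (Arr C) \<and> v \<in> Mor (Arr C) \<and> arr_tgt u = arr_src v \<and>
       (arr_c0 u, arr_c0 v) \<in> E \<and> (arr_c1 u, arr_c1 v) \<in> E}"

definition is_ME :: "('o, 'm, 'x) addcat_scheme \<Rightarrow> ('m \<times> 'm) set \<Rightarrow> 'm arrmor \<Rightarrow> 'm arrmor \<Rightarrow> bool" where
  "is_ME C E u v \<longleftrightarrow>
     (let b = arr_src u; c = arr_tgt u; a = arr_tgt v in
      \<exists>i p c1 c2. (i, p) \<in> E \<and> Src C i = Src C b \<and> Tgt C p = Tgt C a \<and>
        c1 \<in> hom C (Src C c) (Tgt C i) \<and> c2 \<in> hom C (Tgt C i) (Tgt C c) \<and>
        c = Cmp C c2 c1 \<and>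
        seq_morphism C (arr_c0 u, arr_c0 v) (i, p) (Idn C (Src C b)) c1 a \<and>
        seq_morphism C (i, p) (arr_c1 u, arr_c1 v) b c2 (Idn C (Tgt C a)))"

definition is_ME_conflation ::
  "('o, 'm, 'x) addcat_scheme \<Rightarrow> ('m \<times> 'm) set \<Rightarrow> 'm arrmor \<Rightarrow> 'm arrmor \<Rightarrow> bool" where
  "is_ME_conflation C E u v \<longleftrightarrow> (u, v) \<in> ArrE C E \<and> is_ME C E u v"

end

theory Submission
  imports Defs
begin

lemma cat_comp:
  assumes "is_category C" "f \<in> hom C a b" "g \<in> hom C b c"
  shows "Cmp C g f \<in> hom C a c"
  using assms unfolding is_category_def hom_def by auto

lemma cat_assoc:
  assumes "is_category C" "f \<in> hom C a b" "g \<in> hom C b c" "h \<in> hom C c d"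
  shows "Cmp C h (Cmp C g f) = Cmp C (Cmp C h g) f"
  using assms unfolding is_category_def hom_def by auto

lemma cat_idl:
  assumes "is_category C" "f \<in> hom C a b"
  shows "Cmp C (Idn C b) f = f"
  using assms unfolding is_category_def hom_def by auto

lemma cat_idr:
  assumes "is_category C" "f \<in> hom C a b"
  shows "Cmp C f (Idn C a) = f"
  using assms unfolding is_category_def hom_def by auto

lemma cat_id:
  assumes "is_category C" "a \<in> Obj C"
  shows "Idn C a \<in> hom C a a"
  using assms unfolding is_category_def hom_def by auto

lemma cat_obj:
  assumes "is_category C" "f \<in> hom C a b"
  shows "a \<in> Obj C" "b \<in> Obj C"
  using assms unfolding is_category_def hom_def by auto

lemma cat_mor_hom:
  assumes "f \<in> Mor C"
  shows "f \<in> hom C (Src C f) (Tgt C f)"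
  using assms unfolding hom_def by auto

lemma pa_cat: "is_preadditive C \<Longrightarrow> is_category C"
  unfolding is_preadditive_def by blast

lemma pa_zero_hom: "is_preadditive C \<Longrightarrow> a \<in> Obj C \<Longrightarrow> b \<in> Obj C \<Longrightarrow> Zro C a b \<in> hom C a b"
  unfolding is_preadditive_def by blast

lemma pa_neg_hom: "is_preadditive C \<Longrightarrow> a \<in> Obj C \<Longrightarrow> b \<in> Obj C \<Longrightarrow> f \<in> hom C a b \<Longrightarrow> Ngt C f \<in> hom C a b"
  unfolding is_preadditive_def by blast

lemma pa_assoc: "is_preadditive C \<Longrightarrow> a \<in> Obj C \<Longrightarrow> b \<in> Obj C \<Longrightarrow> f \<in> hom C a b \<Longrightarrow>
   g \<in> hom C a b \<Longrightarrow> h \<in> hom C a b \<Longrightarrow> Pls C (Pls C f g) h = Pls C f (Pls C g h)"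
  unfolding is_preadditive_def by blast

lemma pa_zero_r: "is_preadditive C \<Longrightarrow> a \<in> Obj C \<Longrightarrow> b \<in> Obj C \<Longrightarrow> f \<in> hom C a b \<Longrightarrow> Pls C f (Zro C a b) = f"
  unfolding is_preadditive_def by blast

lemma pa_neg_r: "is_preadditive C \<Longrightarrow> a \<in> Obj C \<Longrightarrow> b \<in> Obj C \<Longrightarrow> f \<in> hom C a b \<Longrightarrow> Pls C f (Ngt C f) = Zro C a b"
  unfolding is_preadditive_def by blast

lemma pa_distr_r:
  assumes "is_preadditive C" "a \<in> Obj C" "b \<in> Obj C" "c \<in> Obj C" "f \<in> hom C a b"
   "g \<in> hom C b c" "h \<in> hom C b c" shows "Cmp C (Pls C g h) f = Pls C (Cmp C g f) (Cmp C h f)"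
proof -
  have X: "\<forall>a\<in>Obj C. \<forall>b\<in>Obj C. \<forall>c\<in>Obj C.
        (\<forall>f\<in>hom C a b. \<forall>g\<in>hom C a b. \<forall>h\<in>hom C b c.
           Cmp C h (Pls C f g) = Pls C (Cmp C h f) (Cmp C h g)) \<and>
        (\<forall>f\<in>hom C a b. \<forall>g\<in>hom C b c. \<forall>h\<in>hom C b c.
           Cmp C (Pls C g h) f = Pls C (Cmp C g f) (Cmp C h f))"
    using assms(1) unfolding is_preadditive_def by (rule conjunct2[OF conjunct2])
  show ?thesis using X[rule_format, OF assms(2,3,4), THEN conjunct2, rule_format, OF assms(5,6,7)] .
qed

lemma zero_comp:
  assumes P: "is_preadditive C" and f: "f \<in> hom C a b" and c: "c \<in> Obj C"
  shows "Cmp C (Zro C b c) f = Zro C a c"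
proof -
  have cat: "is_category C" using pa_cat[OF P] .
  have a: "a \<in> Obj C" and b: "b \<in> Obj C" using cat_obj[OF cat f] by auto
  have Zbc: "Zro C b c \<in> hom C b c" using pa_zero_hom[OF P b c] .
  define h where "h = Cmp C (Zro C b c) f"
  have h: "h \<in> hom C a c" unfolding h_def using cat_comp[OF cat f Zbc] .
  have ZZ: "Pls C (Zro C b c) (Zro C b c) = Zro C b c"
    using pa_zero_r[OF P b c Zbc] .
  have "h = Cmp C (Pls C (Zro C b c) (Zro C b c)) f" unfolding h_def ZZ ..
  also have "\<dots> = Pls C h h" unfolding h_def
    using pa_distr_r[OF P a b c f Zbc Zbc] .
  finally have hh: "h = Pls C h h" .
  have nh: "Ngt C h \<in> hom C a c" using pa_neg_hom[OF P a c h] .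
  have "Zro C a c = Pls C h (Ngt C h)" using pa_neg_r[OF P a c h] by simp
  also have "\<dots> = Pls C (Pls C h h) (Ngt C h)" using hh by simp
  also have "\<dots> = Pls C h (Pls C h (Ngt C h))"
    using pa_assoc[OF P a c h h nh] .
  also have "\<dots> = Pls C h (Zro C a c)" using pa_neg_r[OF P a c h] by simp
  also have "\<dots> = h" using pa_zero_r[OF P a c h] .
  finally show ?thesis unfolding h_def by simp
qed

lemma arr_sel[simp]:
  "arr_src (a, b, c, d) = a" "arr_tgt (a, b, c, d) = b"
  "arr_c0 (a, b, c, d) = c" "arr_c1 (a, b, c, d) = d"
  by (simp_all add: arr_src_def arr_tgt_def arr_c0_def arr_c1_def)

lemma Arr_simps:
  "Obj (Arr C) = Mor C" "Src (Arr C) = arr_src" "Tgt (Arr C) = arr_tgt"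
  "Cmp (Arr C) v u = (arr_src u, arr_tgt v, Cmp C (arr_c0 v) (arr_c0 u), Cmp C (arr_c1 v) (arr_c1 u))"
  by (simp_all add: Arr_def)

lemma Arr_Mor:
  "x \<in> Mor (Arr C) \<longleftrightarrow> arr_src x \<in> Mor C \<and> arr_tgt x \<in> Mor C \<and>
     arr_c0 x \<in> hom C (Src C (arr_src x)) (Src C (arr_tgt x)) \<and>
     arr_c1 x \<in> hom C (Tgt C (arr_src x)) (Tgt C (arr_tgt x)) \<and>
     Cmp C (arr_tgt x) (arr_c0 x) = Cmp C (arr_c1 x) (arr_src x)"
proof -
  have M: "Mor (Arr C) = {(a, b, f0, f1). a \<in> Mor C \<and> b \<in> Mor C \<and>
              f0 \<in> hom C (Src C a) (Src C b) \<and> f1 \<in> hom C (Tgt C a) (Tgt C b) \<and>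
              Cmp C b f0 = Cmp C f1 a}" by (simp add: Arr_def)
  obtain a b f0 f1 where x: "x = (a, b, f0, f1)" by (cases x) auto
  show ?thesis unfolding M x by simp
qed

lemma Arr_hom:
  "x \<in> hom (Arr C) a b \<longleftrightarrow> x \<in> Mor (Arr C) \<and> arr_src x = a \<and> arr_tgt x = b"
  by (simp add: hom_def Arr_def)

lemma arr_eq:
  "x = y \<longleftrightarrow> arr_src x = arr_src y \<and> arr_tgt x = arr_tgt y \<and> arr_c0 x = arr_c0 y \<and> arr_c1 x = arr_c1 y"
  by (cases x; cases y) auto

lemma coprod_univ:
  assumes "is_coproduct C I A S \<iota>" "x \<in> Obj C" "\<forall>k\<in>I. f k \<in> hom C (A k) x"
  shows "\<exists>!g. g \<in> hom C S x \<and> (\<forall>k\<in>I. Cmp C g (\<iota> k) = f k)"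
proof -
  have X: "\<forall>x \<in> Obj C. \<forall>f. (\<forall>k \<in> I. f k \<in> hom C (A k) x) \<longrightarrow>
        (\<exists>!g. g \<in> hom C S x \<and> (\<forall>k \<in> I. Cmp C g (\<iota> k) = f k))"
    using assms(1) unfolding is_coproduct_def by (rule conjunct2[OF conjunct2])
  show ?thesis using mp[OF spec[where x=f, OF bspec[OF X assms(2)]] assms(3)] .
qed

lemma coprod_obj: "is_coproduct C I A S \<iota> \<Longrightarrow> S \<in> Obj C"
  unfolding is_coproduct_def by (rule conjunct1)

lemma coprod_inj: "is_coproduct C I A S \<iota> \<Longrightarrow> k \<in> I \<Longrightarrow> \<iota> k \<in> hom C (A k) S"
  unfolding is_coproduct_def by blast

lemma coprod_ex:
  assumes "is_coproduct C I A S \<iota>" "x \<in> Obj C" "\<forall>k\<in>I. f k \<in> hom C (A k) x"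
  shows "\<exists>g. g \<in> hom C S x \<and> (\<forall>k\<in>I. Cmp C g (\<iota> k) = f k)"
  using coprod_univ[OF assms] by (rule ex1_implies_ex)

lemma coprod_uniq:
  assumes cat: "is_category C" and cp: "is_coproduct C I A S \<iota>" and x: "x \<in> Obj C"
    and g: "g \<in> hom C S x" and g': "g' \<in> hom C S x"
    and eq: "\<forall>k\<in>I. Cmp C g (\<iota> k) = Cmp C g' (\<iota> k)"
  shows "g = g'"
proof -
  have "\<forall>k\<in>I. Cmp C g (\<iota> k) \<in> hom C (A k) x"
    using cat_comp[OF cat coprod_inj[OF cp] g] by blast
  then have U: "\<exists>!h. h \<in> hom C S x \<and> (\<forall>k\<in>I. Cmp C h (\<iota> k) = Cmp C g (\<iota> k))"
    by (rule coprod_univ[OF cp x])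
  show ?thesis
    apply (rule ex1E[OF U])
    using g g' eq by (metis)
qed

lemma Arr_homI:
  assumes "a \<in> Mor C" "b \<in> Mor C" "f0 \<in> hom C (Src C a) (Src C b)"
    "f1 \<in> hom C (Tgt C a) (Tgt C b)" "Cmp C b f0 = Cmp C f1 a"
  shows "(a, b, f0, f1) \<in> hom (Arr C) a b"
  using assms by (simp add: Arr_hom Arr_Mor)

lemma Arr_homD:
  assumes "x \<in> hom (Arr C) a b"
  shows "a \<in> Mor C" "b \<in> Mor C" "arr_src x = a" "arr_tgt x = b"
    "arr_c0 x \<in> hom C (Src C a) (Src C b)" "arr_c1 x \<in> hom C (Tgt C a) (Tgt C b)"
    "Cmp C b (arr_c0 x) = Cmp C (arr_c1 x) a"
  using assms by (auto simp add: Arr_hom Arr_Mor)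

lemma mor_obj:
  assumes "is_category C" "f \<in> Mor C"
  shows "Src C f \<in> Obj C" "Tgt C f \<in> Obj C"
  using assms unfolding is_category_def by auto

lemma coprod_arr_src:
  fixes C :: "('o, 'm, 'x) addcat_scheme"
  assumes P: "is_preadditive C" and cp: "is_coproduct (Arr C) I A S \<iota>"
  shows "is_coproduct C I (\<lambda>k. Src C (A k)) (Src C S) (\<lambda>k. arr_c0 (\<iota> k))"
proof -
  have cat: "is_category C" using pa_cat[OF P] .
  have S: "S \<in> Mor C" using coprod_obj[OF cp] by (simp add: Arr_simps)
  have ik: "\<iota> k \<in> hom (Arr C) (A k) S" if "k \<in> I" for k using coprod_inj[OF cp that] .
  have Ak: "A k \<in> Mor C" if "k \<in> I" for k using Arr_homD(1)[OF ik[OF that]] .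
  have SO: "Src C S \<in> Obj C" using mor_obj[OF cat S] by simp
  show ?thesis unfolding is_coproduct_def
  proof (intro conjI ballI allI impI)
    show "Src C S \<in> Obj C" by fact
    fix k assume "k \<in> I" then show "arr_c0 (\<iota> k) \<in> hom C (Src C (A k)) (Src C S)"
      using Arr_homD(5)[OF ik] by blast
  next
    fix x f assume x: "x \<in> Obj C" and f: "\<forall>k\<in>I. f k \<in> hom C (Src C (A k)) x"
    define Z where "Z = Zro C x x"
    have Zh: "Z \<in> hom C x x" unfolding Z_def using pa_zero_hom[OF P x x] .
    then have Z: "Z \<in> Mor C" "Src C Z = x" "Tgt C Z = x" unfolding hom_def by auto
    define \<phi> where "\<phi> k = (A k, Z, f k, Zro C (Tgt C (A k)) x)" for k
    have \<phi>: "\<phi> k \<in> hom (Arr C) (A k) Z" if k: "k \<in> I" for k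
      unfolding \<phi>_def
    proof (rule Arr_homI)
      show "A k \<in> Mor C" using Ak[OF k] .
      show "Z \<in> Mor C" by fact
      show "f k \<in> hom C (Src C (A k)) (Src C Z)" using f k Z by simp
      have T: "Tgt C (A k) \<in> Obj C" using mor_obj[OF cat Ak[OF k]] by simp
      show "Zro C (Tgt C (A k)) x \<in> hom C (Tgt C (A k)) (Tgt C Z)"
        using pa_zero_hom[OF P T x] Z by simp
      have "Cmp C Z (f k) = Zro C (Src C (A k)) x"
        unfolding Z_def using zero_comp[OF P _ x] f k by blast
      also have "\<dots> = Cmp C (Zro C (Tgt C (A k)) x) (A k)"
        using zero_comp[OF P cat_mor_hom[OF Ak[OF k]] x] by simp
      finally show "Cmp C Z (f k) = Cmp C (Zro C (Tgt C (A k)) x) (A k)" .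
    qed
    have ZO: "Z \<in> Obj (Arr C)" using Z by (simp add: Arr_simps)
    have U: "\<exists>!G. G \<in> hom (Arr C) S Z \<and> (\<forall>k\<in>I. Cmp (Arr C) G (\<iota> k) = \<phi> k)"
      using coprod_univ[OF cp ZO] \<phi> by blast
    show "\<exists>!g. g \<in> hom C (Src C S) x \<and> (\<forall>k\<in>I. Cmp C g (arr_c0 (\<iota> k)) = f k)"
    proof (rule ex_ex1I)
      obtain G where G: "G \<in> hom (Arr C) S Z" "\<forall>k\<in>I. Cmp (Arr C) G (\<iota> k) = \<phi> k"
        using U by blast
      have "arr_c0 G \<in> hom C (Src C S) x" using Arr_homD(5)[OF G(1)] Z by simp
      moreover have "\<forall>k\<in>I. Cmp C (arr_c0 G) (arr_c0 (\<iota> k)) = f k"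
      proof
        fix k assume k: "k \<in> I"
        have "arr_c0 (Cmp (Arr C) G (\<iota> k)) = arr_c0 (\<phi> k)" using G(2) k by simp
        then show "Cmp C (arr_c0 G) (arr_c0 (\<iota> k)) = f k" by (simp add: Arr_simps \<phi>_def)
      qed
      ultimately show "\<exists>g. g \<in> hom C (Src C S) x \<and> (\<forall>k\<in>I. Cmp C g (arr_c0 (\<iota> k)) = f k)"
        by blast
    next
      define L where "L g = (S, Z, g, Zro C (Tgt C S) x)" for g :: 'm
      have TS: "Tgt C S \<in> Obj C" using mor_obj[OF cat S] by simp
      have L: "L g \<in> hom (Arr C) S Z \<and> (\<forall>k\<in>I. Cmp (Arr C) (L g) (\<iota> k) = \<phi> k)"
        if g: "g \<in> hom C (Src C S) x" "\<forall>k\<in>I. Cmp C g (arr_c0 (\<iota> k)) = f k" for g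
      proof
        show "L g \<in> hom (Arr C) S Z" unfolding L_def
        proof (rule Arr_homI)
          show "S \<in> Mor C" "Z \<in> Mor C" by fact+
          show "g \<in> hom C (Src C S) (Src C Z)" using g Z by simp
          show "Zro C (Tgt C S) x \<in> hom C (Tgt C S) (Tgt C Z)" using pa_zero_hom[OF P TS x] Z by simp
          show "Cmp C Z g = Cmp C (Zro C (Tgt C S) x) S"
            unfolding Z_def using zero_comp[OF P g(1) x] zero_comp[OF P cat_mor_hom[OF S] x] by simp
        qed
        show "\<forall>k\<in>I. Cmp (Arr C) (L g) (\<iota> k) = \<phi> k"
        proof
          fix k assume k: "k \<in> I"
          have "Cmp C (Zro C (Tgt C S) x) (arr_c1 (\<iota> k)) = Zro C (Tgt C (A k)) x"
            using zero_comp[OF P Arr_homD(6)[OF ik[OF k]] x] .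
          then show "Cmp (Arr C) (L g) (\<iota> k) = \<phi> k"
            using g(2) k Arr_homD(3)[OF ik[OF k]] by (simp add: Arr_simps L_def \<phi>_def)
        qed
      qed
      fix g g' assume g: "g \<in> hom C (Src C S) x \<and> (\<forall>k\<in>I. Cmp C g (arr_c0 (\<iota> k)) = f k)"
        and g': "g' \<in> hom C (Src C S) x \<and> (\<forall>k\<in>I. Cmp C g' (arr_c0 (\<iota> k)) = f k)"
      have "L g = L g'" using U L g g' by metis
      then show "g = g'" by (simp add: L_def)
    qed
  qed
qed

lemma coprod_arr_tgt:
  fixes C :: "('o, 'm, 'x) addcat_scheme"
  assumes cat: "is_category C" and cp: "is_coproduct (Arr C) I A S \<iota>"
  shows "is_coproduct C I (\<lambda>k. Tgt C (A k)) (Tgt C S) (\<lambda>k. arr_c1 (\<iota> k))"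
proof -
  have S: "S \<in> Mor C" using coprod_obj[OF cp] by (simp add: Arr_simps)
  have ik: "\<iota> k \<in> hom (Arr C) (A k) S" if "k \<in> I" for k using coprod_inj[OF cp that] .
  have Ak: "A k \<in> Mor C" if "k \<in> I" for k using Arr_homD(1)[OF ik[OF that]] .
  have SO: "Tgt C S \<in> Obj C" using mor_obj[OF cat S] by simp
  show ?thesis unfolding is_coproduct_def
  proof (intro conjI ballI allI impI)
    show "Tgt C S \<in> Obj C" by fact
    fix k assume "k \<in> I" then show "arr_c1 (\<iota> k) \<in> hom C (Tgt C (A k)) (Tgt C S)"
      using Arr_homD(6)[OF ik] by blast
  next
    fix x f assume x: "x \<in> Obj C" and f: "\<forall>k\<in>I. f k \<in> hom C (Tgt C (A k)) x"
    define Z where "Z = Idn C x"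
    have Zh: "Z \<in> hom C x x" unfolding Z_def using cat_id[OF cat x] .
    then have Z: "Z \<in> Mor C" "Src C Z = x" "Tgt C Z = x" unfolding hom_def by auto
    define \<phi> where "\<phi> k = (A k, Z, Cmp C (f k) (A k), f k)" for k
    have \<phi>: "\<phi> k \<in> hom (Arr C) (A k) Z" if k: "k \<in> I" for k
      unfolding \<phi>_def
    proof (rule Arr_homI)
      show "A k \<in> Mor C" using Ak[OF k] .
      show "Z \<in> Mor C" by fact
      have fk: "f k \<in> hom C (Tgt C (A k)) x" using f k by blast
      have c: "Cmp C (f k) (A k) \<in> hom C (Src C (A k)) x"
        using cat_comp[OF cat cat_mor_hom[OF Ak[OF k]] fk] .
      then show "Cmp C (f k) (A k) \<in> hom C (Src C (A k)) (Src C Z)" using Z by simp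
      show "f k \<in> hom C (Tgt C (A k)) (Tgt C Z)" using fk Z by simp
      show "Cmp C Z (Cmp C (f k) (A k)) = Cmp C (f k) (A k)"
        unfolding Z_def using cat_idl[OF cat c] .
    qed
    have ZO: "Z \<in> Obj (Arr C)" using Z by (simp add: Arr_simps)
    have U: "\<exists>!G. G \<in> hom (Arr C) S Z \<and> (\<forall>k\<in>I. Cmp (Arr C) G (\<iota> k) = \<phi> k)"
      using coprod_univ[OF cp ZO] \<phi> by blast
    show "\<exists>!g. g \<in> hom C (Tgt C S) x \<and> (\<forall>k\<in>I. Cmp C g (arr_c1 (\<iota> k)) = f k)"
    proof (rule ex_ex1I)
      obtain G where G: "G \<in> hom (Arr C) S Z" "\<forall>k\<in>I. Cmp (Arr C) G (\<iota> k) = \<phi> k"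
        using U by blast
      have "arr_c1 G \<in> hom C (Tgt C S) x" using Arr_homD(6)[OF G(1)] Z by simp
      moreover have "\<forall>k\<in>I. Cmp C (arr_c1 G) (arr_c1 (\<iota> k)) = f k"
      proof
        fix k assume k: "k \<in> I"
        have "arr_c1 (Cmp (Arr C) G (\<iota> k)) = arr_c1 (\<phi> k)" using G(2) k by simp
        then show "Cmp C (arr_c1 G) (arr_c1 (\<iota> k)) = f k" by (simp add: Arr_simps \<phi>_def)
      qed
      ultimately show "\<exists>g. g \<in> hom C (Tgt C S) x \<and> (\<forall>k\<in>I. Cmp C g (arr_c1 (\<iota> k)) = f k)"
        by blast
    next
      define L where "L g = (S, Z, Cmp C g S, g)" for g :: 'm
      have L: "L g \<in> hom (Arr C) S Z \<and> (\<forall>k\<in>I. Cmp (Arr C) (L g) (\<iota> k) = \<phi> k)"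
        if g: "g \<in> hom C (Tgt C S) x" "\<forall>k\<in>I. Cmp C g (arr_c1 (\<iota> k)) = f k" for g
      proof
        have gS: "Cmp C g S \<in> hom C (Src C S) x" using cat_comp[OF cat cat_mor_hom[OF S] g(1)] .
        show "L g \<in> hom (Arr C) S Z" unfolding L_def
        proof (rule Arr_homI)
          show "S \<in> Mor C" "Z \<in> Mor C" by fact+
          show "Cmp C g S \<in> hom C (Src C S) (Src C Z)" using gS Z by simp
          show "g \<in> hom C (Tgt C S) (Tgt C Z)" using g Z by simp
          show "Cmp C Z (Cmp C g S) = Cmp C g S"
            unfolding Z_def using cat_idl[OF cat gS] .
        qed
        show "\<forall>k\<in>I. Cmp (Arr C) (L g) (\<iota> k) = \<phi> k"
        proof
          fix k assume k: "k \<in> I"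
          have c0: "arr_c0 (\<iota> k) \<in> hom C (Src C (A k)) (Src C S)" using Arr_homD(5)[OF ik[OF k]] .
          have c1: "arr_c1 (\<iota> k) \<in> hom C (Tgt C (A k)) (Tgt C S)" using Arr_homD(6)[OF ik[OF k]] .
          have "Cmp C (Cmp C g S) (arr_c0 (\<iota> k)) = Cmp C g (Cmp C S (arr_c0 (\<iota> k)))"
            using cat_assoc[OF cat c0 cat_mor_hom[OF S] g(1)] by simp
          also have "\<dots> = Cmp C g (Cmp C (arr_c1 (\<iota> k)) (A k))"
            using Arr_homD(7)[OF ik[OF k]] by simp
          also have "\<dots> = Cmp C (Cmp C g (arr_c1 (\<iota> k))) (A k)"
            using cat_assoc[OF cat cat_mor_hom[OF Ak[OF k]] c1 g(1)] .
          also have "\<dots> = Cmp C (f k) (A k)" using g(2) k by simp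
          finally have e: "Cmp C (Cmp C g S) (arr_c0 (\<iota> k)) = Cmp C (f k) (A k)" .
          then show "Cmp (Arr C) (L g) (\<iota> k) = \<phi> k"
            using g(2) k Arr_homD(3)[OF ik[OF k]] by (simp add: Arr_simps L_def \<phi>_def)
        qed
      qed
      fix g g' assume g: "g \<in> hom C (Tgt C S) x \<and> (\<forall>k\<in>I. Cmp C g (arr_c1 (\<iota> k)) = f k)"
        and g': "g' \<in> hom C (Tgt C S) x \<and> (\<forall>k\<in>I. Cmp C g' (arr_c1 (\<iota> k)) = f k)"
      have "L g = L g'" using U L g g' by metis
      then show "g = g'" by (simp add: L_def)
    qed
  qed
qed

lemma coprod_cong:
  assumes cp: "is_coproduct C I A S \<iota>" and eq: "\<And>k. k \<in> I \<Longrightarrow> A k = A' k"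
  shows "is_coproduct C I A' S \<iota>"
  unfolding is_coproduct_def
proof (intro conjI ballI allI impI)
  show "S \<in> Obj C" using coprod_obj[OF cp] .
  fix k assume "k \<in> I" then show "\<iota> k \<in> hom C (A' k) S" using coprod_inj[OF cp] eq by metis
next
  fix x f assume x: "x \<in> Obj C" and f: "\<forall>k\<in>I. f k \<in> hom C (A' k) x"
  then have "\<forall>k\<in>I. f k \<in> hom C (A k) x" using eq by simp
  then show "\<exists>!g. g \<in> hom C S x \<and> (\<forall>k\<in>I. Cmp C g (\<iota> k) = f k)"
    using coprod_univ[OF cp x] by blast
qed

lemma exact_pa: "is_exact_category C E \<Longrightarrow> is_preadditive C"
  unfolding is_exact_category_def is_additive_def by blast

lemma exact_E:
  assumes "is_exact_category C E" "(i, p) \<in> E"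
  shows "i \<in> Mor C" "p \<in> Mor C" "Tgt C i = Src C p"
proof -
  have "\<forall>(i, d)\<in>E. is_kernel_cokernel_pair C i d"
    using assms(1) unfolding is_exact_category_def by (rule conjunct1[OF conjunct2])
  then have "is_kernel_cokernel_pair C i p" using assms(2) by blast
  then show "i \<in> Mor C" "p \<in> Mor C" "Tgt C i = Src C p"
    unfolding is_kernel_cokernel_pair_def is_kernel_def by blast+
qed

lemma hec_ex:
  fixes I :: "'i set"
  assumes "has_exact_coproducts C E TYPE('i)" "\<forall>k\<in>I. A k \<in> Obj C"
  shows "\<exists>S \<iota>. is_coproduct C I A S \<iota>"
proof -
  have "\<forall>(I :: 'i set) A. (\<forall>k \<in> I. A k \<in> Obj C) \<longrightarrow> (\<exists>S \<iota>. is_coproduct C I A S \<iota>)"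
    using assms(1) unfolding has_exact_coproducts_def by (rule conjunct1)
  then show ?thesis using assms(2) by blast
qed

lemma hec_E:
  fixes I :: "'i set"
  assumes "has_exact_coproducts C E TYPE('i)" "\<forall>k\<in>I. (u k, v k) \<in> E"
    "is_coproduct_of_seqs C I u v SB iB SC iC SA iA U V"
  shows "(U, V) \<in> E"
proof -
  have "\<forall>(I :: 'i set) u v SB iB SC iC SA iA U V.
        (\<forall>k \<in> I. (u k, v k) \<in> E) \<longrightarrow>
        is_coproduct_of_seqs C I u v SB iB SC iC SA iA U V \<longrightarrow> (U, V) \<in> E"
    using assms(1) unfolding has_exact_coproducts_def by (rule conjunct2)
  then show ?thesis using assms(2,3) by blast
qed

theorem proposition5p3:
  fixes C :: "('o, 'm) addcat"
    and E :: "('m \<times> 'm) set"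
    and I :: "'i set"
    and u v :: "'i \<Rightarrow> 'm arrmor"
    and SB SC SA :: "'m"
    and iB iC iA :: "'i \<Rightarrow> 'm arrmor"
    and U V :: "'m arrmor"
  assumes "is_exact_category C E"
    and "has_exact_coproducts C E TYPE('i)"
    and "\<forall>k \<in> I. is_ME_conflation C E (u k) (v k)"
    and "is_coproduct_of_seqs (Arr C) I u v SB iB SC iC SA iA U V"
  shows "is_ME_conflation C E U V"
proof -
  note ex = assms(1) and hc = assms(2) and me = assms(3) and cs = assms(4)
  have P: "is_preadditive C" using exact_pa[OF ex] .
  have cat: "is_category C" using pa_cat[OF P] .
  define b where "b k = arr_src (u k)" for k
  define c where "c k = arr_tgt (u k)" for k
  define a where "a k = arr_tgt (v k)" for k
  have uv: "\<forall>k\<in>I. u k \<in> Mor (Arr C) \<and> v k \<in> Mor (Arr C) \<and> arr_tgt (u k) = arr_src (v k)"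
    using cs unfolding is_coproduct_of_seqs_def by (simp add: Arr_simps)
  have cB: "is_coproduct (Arr C) I b SB iB"
    using cs unfolding is_coproduct_of_seqs_def b_def[abs_def] by (simp add: Arr_simps)
  have cC: "is_coproduct (Arr C) I c SC iC"
    using cs unfolding is_coproduct_of_seqs_def c_def[abs_def] by (simp add: Arr_simps)
  have cA: "is_coproduct (Arr C) I a SA iA"
    using cs unfolding is_coproduct_of_seqs_def a_def[abs_def] by (simp add: Arr_simps)
  have Uh: "U \<in> hom (Arr C) SB SC" and Vh: "V \<in> hom (Arr C) SC SA"
    using cs unfolding is_coproduct_of_seqs_def by blast+
  have comm: "\<forall>k\<in>I. Cmp (Arr C) U (iB k) = Cmp (Arr C) (iC k) (u k) \<and>
      Cmp (Arr C) V (iC k) = Cmp (Arr C) (iA k) (v k)"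
    using cs unfolding is_coproduct_of_seqs_def by blast
  have uh: "u k \<in> hom (Arr C) (b k) (c k)" if "k \<in> I" for k
    using uv that by (simp add: Arr_hom b_def c_def)
  have vh: "v k \<in> hom (Arr C) (c k) (a k)" if "k \<in> I" for k
    using uv that by (simp add: Arr_hom a_def c_def)
  have cB0: "is_coproduct C I (\<lambda>k. Src C (b k)) (Src C SB) (\<lambda>k. arr_c0 (iB k))"
    using coprod_arr_src[OF P cB] .
  have cB1: "is_coproduct C I (\<lambda>k. Tgt C (b k)) (Tgt C SB) (\<lambda>k. arr_c1 (iB k))"
    using coprod_arr_tgt[OF cat cB] .
  have cC0: "is_coproduct C I (\<lambda>k. Src C (c k)) (Src C SC) (\<lambda>k. arr_c0 (iC k))"
    using coprod_arr_src[OF P cC] .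
  have cC1: "is_coproduct C I (\<lambda>k. Tgt C (c k)) (Tgt C SC) (\<lambda>k. arr_c1 (iC k))"
    using coprod_arr_tgt[OF cat cC] .
  have cA0: "is_coproduct C I (\<lambda>k. Src C (a k)) (Src C SA) (\<lambda>k. arr_c0 (iA k))"
    using coprod_arr_src[OF P cA] .
  have cA1: "is_coproduct C I (\<lambda>k. Tgt C (a k)) (Tgt C SA) (\<lambda>k. arr_c1 (iA k))"
    using coprod_arr_tgt[OF cat cA] .
  have u0: "arr_c0 (u k) \<in> hom C (Src C (b k)) (Src C (c k))" if "k \<in> I" for k
    using Arr_homD(5)[OF uh[OF that]] .
  have u1: "arr_c1 (u k) \<in> hom C (Tgt C (b k)) (Tgt C (c k))" if "k \<in> I" for k
    using Arr_homD(6)[OF uh[OF that]] .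
  have v0: "arr_c0 (v k) \<in> hom C (Src C (c k)) (Src C (a k))" if "k \<in> I" for k
    using Arr_homD(5)[OF vh[OF that]] .
  have v1: "arr_c1 (v k) \<in> hom C (Tgt C (c k)) (Tgt C (a k))" if "k \<in> I" for k
    using Arr_homD(6)[OF vh[OF that]] .
  have U0: "arr_c0 U \<in> hom C (Src C SB) (Src C SC)" using Arr_homD(5)[OF Uh] .
  have U1: "arr_c1 U \<in> hom C (Tgt C SB) (Tgt C SC)" using Arr_homD(6)[OF Uh] .
  have V0: "arr_c0 V \<in> hom C (Src C SC) (Src C SA)" using Arr_homD(5)[OF Vh] .
  have V1: "arr_c1 V \<in> hom C (Tgt C SC) (Tgt C SA)" using Arr_homD(6)[OF Vh] .
  have comm0: "Cmp C (arr_c0 U) (arr_c0 (iB k)) = Cmp C (arr_c0 (iC k)) (arr_c0 (u k)) \<and>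
      Cmp C (arr_c0 V) (arr_c0 (iC k)) = Cmp C (arr_c0 (iA k)) (arr_c0 (v k))" if k: "k \<in> I" for k
  proof -
    have "arr_c0 (Cmp (Arr C) U (iB k)) = arr_c0 (Cmp (Arr C) (iC k) (u k)) \<and>
      arr_c0 (Cmp (Arr C) V (iC k)) = arr_c0 (Cmp (Arr C) (iA k) (v k))" using comm k by simp
    then show ?thesis by (simp add: Arr_simps)
  qed
  have comm1: "Cmp C (arr_c1 U) (arr_c1 (iB k)) = Cmp C (arr_c1 (iC k)) (arr_c1 (u k)) \<and>
      Cmp C (arr_c1 V) (arr_c1 (iC k)) = Cmp C (arr_c1 (iA k)) (arr_c1 (v k))" if k: "k \<in> I" for k
  proof -
    have "arr_c1 (Cmp (Arr C) U (iB k)) = arr_c1 (Cmp (Arr C) (iC k) (u k)) \<and>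
      arr_c1 (Cmp (Arr C) V (iC k)) = arr_c1 (Cmp (Arr C) (iA k) (v k))" using comm k by simp
    then show ?thesis by (simp add: Arr_simps)
  qed
  have Ek: "(u k, v k) \<in> ArrE C E" if "k \<in> I" for k
    using me that unfolding is_ME_conflation_def by blast
  have E0: "(arr_c0 (u k), arr_c0 (v k)) \<in> E" and E1: "(arr_c1 (u k), arr_c1 (v k)) \<in> E"
    if "k \<in> I" for k using Ek[OF that] unfolding ArrE_def by auto
  have UV0: "(arr_c0 U, arr_c0 V) \<in> E"
  proof (rule hec_E[OF hc])
    show "\<forall>k\<in>I. (arr_c0 (u k), arr_c0 (v k)) \<in> E" using E0 by blast
    show "is_coproduct_of_seqs C I (\<lambda>k. arr_c0 (u k)) (\<lambda>k. arr_c0 (v k))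
      (Src C SB) (\<lambda>k. arr_c0 (iB k)) (Src C SC) (\<lambda>k. arr_c0 (iC k)) (Src C SA) (\<lambda>k. arr_c0 (iA k))
      (arr_c0 U) (arr_c0 V)"
      unfolding is_coproduct_of_seqs_def
    proof (intro conjI ballI)
      fix k assume k: "k \<in> I"
      show "arr_c0 (u k) \<in> Mor C" "arr_c0 (v k) \<in> Mor C"
        "Tgt C (arr_c0 (u k)) = Src C (arr_c0 (v k))"
        using u0[OF k] v0[OF k] unfolding hom_def by auto
      show "Cmp C (arr_c0 U) (arr_c0 (iB k)) = Cmp C (arr_c0 (iC k)) (arr_c0 (u k))"
        "Cmp C (arr_c0 V) (arr_c0 (iC k)) = Cmp C (arr_c0 (iA k)) (arr_c0 (v k))"
        using comm0[OF k] by auto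
    next
      show "is_coproduct C I (\<lambda>k. Src C (arr_c0 (u k))) (Src C SB) (\<lambda>k. arr_c0 (iB k))"
        by (rule coprod_cong[OF cB0]) (use u0 in \<open>simp add: hom_def\<close>)
      show "is_coproduct C I (\<lambda>k. Tgt C (arr_c0 (u k))) (Src C SC) (\<lambda>k. arr_c0 (iC k))"
        by (rule coprod_cong[OF cC0]) (use u0 in \<open>simp add: hom_def\<close>)
      show "is_coproduct C I (\<lambda>k. Tgt C (arr_c0 (v k))) (Src C SA) (\<lambda>k. arr_c0 (iA k))"
        by (rule coprod_cong[OF cA0]) (use v0 in \<open>simp add: hom_def\<close>)
      show "arr_c0 U \<in> hom C (Src C SB) (Src C SC)" by fact
      show "arr_c0 V \<in> hom C (Src C SC) (Src C SA)" by fact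
    qed
  qed
  have UV1: "(arr_c1 U, arr_c1 V) \<in> E"
  proof (rule hec_E[OF hc])
    show "\<forall>k\<in>I. (arr_c1 (u k), arr_c1 (v k)) \<in> E" using E1 by blast
    show "is_coproduct_of_seqs C I (\<lambda>k. arr_c1 (u k)) (\<lambda>k. arr_c1 (v k))
      (Tgt C SB) (\<lambda>k. arr_c1 (iB k)) (Tgt C SC) (\<lambda>k. arr_c1 (iC k)) (Tgt C SA) (\<lambda>k. arr_c1 (iA k))
      (arr_c1 U) (arr_c1 V)"
      unfolding is_coproduct_of_seqs_def
    proof (intro conjI ballI)
      fix k assume k: "k \<in> I"
      show "arr_c1 (u k) \<in> Mor C" "arr_c1 (v k) \<in> Mor C"
        "Tgt C (arr_c1 (u k)) = Src C (arr_c1 (v k))"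
        using u1[OF k] v1[OF k] unfolding hom_def by auto
      show "Cmp C (arr_c1 U) (arr_c1 (iB k)) = Cmp C (arr_c1 (iC k)) (arr_c1 (u k))"
        "Cmp C (arr_c1 V) (arr_c1 (iC k)) = Cmp C (arr_c1 (iA k)) (arr_c1 (v k))"
        using comm1[OF k] by auto
    next
      show "is_coproduct C I (\<lambda>k. Src C (arr_c1 (u k))) (Tgt C SB) (\<lambda>k. arr_c1 (iB k))"
        by (rule coprod_cong[OF cB1]) (use u1 in \<open>simp add: hom_def\<close>)
      show "is_coproduct C I (\<lambda>k. Tgt C (arr_c1 (u k))) (Tgt C SC) (\<lambda>k. arr_c1 (iC k))"
        by (rule coprod_cong[OF cC1]) (use u1 in \<open>simp add: hom_def\<close>)
      show "is_coproduct C I (\<lambda>k. Tgt C (arr_c1 (v k))) (Tgt C SA) (\<lambda>k. arr_c1 (iA k))"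
        by (rule coprod_cong[OF cA1]) (use v1 in \<open>simp add: hom_def\<close>)
      show "arr_c1 U \<in> hom C (Tgt C SB) (Tgt C SC)" by fact
      show "arr_c1 V \<in> hom C (Tgt C SC) (Tgt C SA)" by fact
    qed
  qed
  have AE: "(U, V) \<in> ArrE C E"
    unfolding ArrE_def using Uh Vh UV0 UV1 by (simp add: Arr_hom)
  have ME: "is_ME C E U V"
  proof -
    define Q where "Q k i p c1 c2 \<longleftrightarrow> (i, p) \<in> E \<and> Src C i = Src C (b k) \<and> Tgt C p = Tgt C (a k) \<and>
        c1 \<in> hom C (Src C (c k)) (Tgt C i) \<and> c2 \<in> hom C (Tgt C i) (Tgt C (c k)) \<and>
        c k = Cmp C c2 c1 \<and>
        seq_morphism C (arr_c0 (u k), arr_c0 (v k)) (i, p) (Idn C (Src C (b k))) c1 (a k) \<and>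
        seq_morphism C (i, p) (arr_c1 (u k), arr_c1 (v k)) (b k) c2 (Idn C (Tgt C (a k)))" for k i p c1 c2
    have "\<forall>k\<in>I. \<exists>i p c1 c2. Q k i p c1 c2"
    proof
      fix k assume k: "k \<in> I"
      have "is_ME C E (u k) (v k)" using me k unfolding is_ME_conflation_def by blast
      then show "\<exists>i p c1 c2. Q k i p c1 c2"
        unfolding is_ME_def Let_def Q_def a_def b_def c_def .
    qed
    then obtain ii pp cc1 cc2 where W: "\<forall>k\<in>I. Q k (ii k) (pp k) (cc1 k) (cc2 k)"
      by metis
    define X where "X k = Tgt C (ii k)" for k
    have Wk: "(ii k, pp k) \<in> E \<and> Src C (ii k) = Src C (b k) \<and> Tgt C (pp k) = Tgt C (a k) \<and>
        cc1 k \<in> hom C (Src C (c k)) (X k) \<and> cc2 k \<in> hom C (X k) (Tgt C (c k)) \<and>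
        c k = Cmp C (cc2 k) (cc1 k) \<and>
        Cmp C (ii k) (Idn C (Src C (b k))) = Cmp C (cc1 k) (arr_c0 (u k)) \<and>
        Cmp C (pp k) (cc1 k) = Cmp C (a k) (arr_c0 (v k)) \<and>
        Cmp C (arr_c1 (u k)) (b k) = Cmp C (cc2 k) (ii k) \<and>
        Cmp C (arr_c1 (v k)) (cc2 k) = Cmp C (Idn C (Tgt C (a k))) (pp k)" if k: "k \<in> I" for k
      using W k unfolding Q_def seq_morphism_def X_def by auto
    have Emor: "ii k \<in> Mor C" "pp k \<in> Mor C" "Tgt C (ii k) = Src C (pp k)" if k: "k \<in> I" for k
      using exact_E[OF ex] Wk[OF k] by blast+
    have iih: "ii k \<in> hom C (Src C (b k)) (X k)" if k: "k \<in> I" for k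
      using Emor[OF k] Wk[OF k] unfolding hom_def X_def by auto
    have pph: "pp k \<in> hom C (X k) (Tgt C (a k))" if k: "k \<in> I" for k
      using Emor[OF k] Wk[OF k] unfolding hom_def X_def by auto
    have c1h: "cc1 k \<in> hom C (Src C (c k)) (X k)" and c2h: "cc2 k \<in> hom C (X k) (Tgt C (c k))"
      if k: "k \<in> I" for k using Wk[OF k] by auto
    have ck: "c k = Cmp C (cc2 k) (cc1 k)" if k: "k \<in> I" for k using Wk[OF k] by auto
    have bh: "b k \<in> hom C (Src C (b k)) (Tgt C (b k))" if k: "k \<in> I" for k
      using cat_mor_hom Arr_homD(1)[OF uh[OF k]] .
    have chh: "c k \<in> hom C (Src C (c k)) (Tgt C (c k))" if k: "k \<in> I" for k
      using cat_mor_hom Arr_homD(2)[OF uh[OF k]] .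
    have ah: "a k \<in> hom C (Src C (a k)) (Tgt C (a k))" if k: "k \<in> I" for k
      using cat_mor_hom Arr_homD(2)[OF vh[OF k]] .
    have e1: "Cmp C (cc1 k) (arr_c0 (u k)) = ii k" if k: "k \<in> I" for k
      using Wk[OF k] cat_idr[OF cat iih[OF k]] by simp
    have e2: "Cmp C (pp k) (cc1 k) = Cmp C (a k) (arr_c0 (v k))" if k: "k \<in> I" for k
      using Wk[OF k] by simp
    have e3: "Cmp C (arr_c1 (u k)) (b k) = Cmp C (cc2 k) (ii k)" if k: "k \<in> I" for k
      using Wk[OF k] by simp
    have e4: "Cmp C (arr_c1 (v k)) (cc2 k) = pp k" if k: "k \<in> I" for k
      using Wk[OF k] cat_idl[OF cat pph[OF k]] by simp
    have iB0: "arr_c0 (iB k) \<in> hom C (Src C (b k)) (Src C SB)"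
      and iB1: "arr_c1 (iB k) \<in> hom C (Tgt C (b k)) (Tgt C SB)"
      and iBc: "Cmp C SB (arr_c0 (iB k)) = Cmp C (arr_c1 (iB k)) (b k)" if k: "k \<in> I" for k
      using Arr_homD(5-7)[OF coprod_inj[OF cB k]] by auto
    have iC0: "arr_c0 (iC k) \<in> hom C (Src C (c k)) (Src C SC)"
      and iC1: "arr_c1 (iC k) \<in> hom C (Tgt C (c k)) (Tgt C SC)"
      and iCc: "Cmp C SC (arr_c0 (iC k)) = Cmp C (arr_c1 (iC k)) (c k)" if k: "k \<in> I" for k
      using Arr_homD(5-7)[OF coprod_inj[OF cC k]] by auto
    have iA0: "arr_c0 (iA k) \<in> hom C (Src C (a k)) (Src C SA)"
      and iA1: "arr_c1 (iA k) \<in> hom C (Tgt C (a k)) (Tgt C SA)"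
      and iAc: "Cmp C SA (arr_c0 (iA k)) = Cmp C (arr_c1 (iA k)) (a k)" if k: "k \<in> I" for k
      using Arr_homD(5-7)[OF coprod_inj[OF cA k]] by auto
    have SBm: "SB \<in> Mor C" using coprod_obj[OF cB] by (simp add: Arr_simps)
    have SCm: "SC \<in> Mor C" using coprod_obj[OF cC] by (simp add: Arr_simps)
    have SAm: "SA \<in> Mor C" using coprod_obj[OF cA] by (simp add: Arr_simps)
    have SBh: "SB \<in> hom C (Src C SB) (Tgt C SB)" using cat_mor_hom[OF SBm] .
    have SCh: "SC \<in> hom C (Src C SC) (Tgt C SC)" using cat_mor_hom[OF SCm] .
    have SAh: "SA \<in> hom C (Src C SA) (Tgt C SA)" using cat_mor_hom[OF SAm] .
    have OB0: "Src C SB \<in> Obj C" using mor_obj[OF cat SBm] by simp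
    have OC0: "Src C SC \<in> Obj C" and OC1: "Tgt C SC \<in> Obj C" using mor_obj[OF cat SCm] by simp_all
    have OA1: "Tgt C SA \<in> Obj C" using mor_obj[OF cat SAm] by simp
    have XO: "\<forall>k\<in>I. X k \<in> Obj C" using cat_obj(2)[OF cat iih] by blast
    obtain SX jX where cX: "is_coproduct C I X SX jX" using hec_ex[OF hc XO] by blast
    have SXO: "SX \<in> Obj C" using coprod_obj[OF cX] .
    have jX: "jX k \<in> hom C (X k) SX" if k: "k \<in> I" for k using coprod_inj[OF cX k] .
    have "\<forall>k\<in>I. Cmp C (jX k) (ii k) \<in> hom C (Src C (b k)) SX" using cat_comp[OF cat iih jX] by blast
    from coprod_ex[OF cB0 SXO this] obtain BI where BI: "BI \<in> hom C (Src C SB) SX" "\<forall>k\<in>I. Cmp C BI (arr_c0 (iB k)) = Cmp C (jX k) (ii k)"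
      by blast
    have "\<forall>k\<in>I. Cmp C (arr_c1 (iA k)) (pp k) \<in> hom C (X k) (Tgt C SA)" using cat_comp[OF cat pph iA1] by blast
    from coprod_ex[OF cX OA1 this] obtain BP where BP: "BP \<in> hom C SX (Tgt C SA)" "\<forall>k\<in>I. Cmp C BP (jX k) = Cmp C (arr_c1 (iA k)) (pp k)"
      by blast
    have "\<forall>k\<in>I. Cmp C (jX k) (cc1 k) \<in> hom C (Src C (c k)) SX" using cat_comp[OF cat c1h jX] by blast
    from coprod_ex[OF cC0 SXO this] obtain K1 where K1: "K1 \<in> hom C (Src C SC) SX" "\<forall>k\<in>I. Cmp C K1 (arr_c0 (iC k)) = Cmp C (jX k) (cc1 k)"
      by blast
    have "\<forall>k\<in>I. Cmp C (arr_c1 (iC k)) (cc2 k) \<in> hom C (X k) (Tgt C SC)" using cat_comp[OF cat c2h iC1] by blast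
    from coprod_ex[OF cX OC1 this] obtain K2 where K2: "K2 \<in> hom C SX (Tgt C SC)" "\<forall>k\<in>I. Cmp C K2 (jX k) = Cmp C (arr_c1 (iC k)) (cc2 k)"
      by blast
    have BIP: "(BI, BP) \<in> E"
    proof (rule hec_E[OF hc])
      show "\<forall>k\<in>I. (ii k, pp k) \<in> E" using Wk by blast
      show "is_coproduct_of_seqs C I ii pp (Src C SB) (\<lambda>k. arr_c0 (iB k)) SX jX
          (Tgt C SA) (\<lambda>k. arr_c1 (iA k)) BI BP"
        unfolding is_coproduct_of_seqs_def
      proof (intro conjI ballI)
        fix k assume k: "k \<in> I"
        show "ii k \<in> Mor C" "pp k \<in> Mor C" "Tgt C (ii k) = Src C (pp k)" using Emor[OF k] .
        show "Cmp C BI (arr_c0 (iB k)) = Cmp C (jX k) (ii k)" using BI k by blast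
        show "Cmp C BP (jX k) = Cmp C (arr_c1 (iA k)) (pp k)" using BP k by blast
      next
        show "is_coproduct C I (\<lambda>k. Src C (ii k)) (Src C SB) (\<lambda>k. arr_c0 (iB k))"
          by (rule coprod_cong[OF cB0]) (use Wk in simp)
        show "is_coproduct C I (\<lambda>k. Tgt C (ii k)) SX jX"
          by (rule coprod_cong[OF cX]) (simp add: X_def)
        show "is_coproduct C I (\<lambda>k. Tgt C (pp k)) (Tgt C SA) (\<lambda>k. arr_c1 (iA k))"
          by (rule coprod_cong[OF cA1]) (use Wk in simp)
        show "BI \<in> hom C (Src C SB) SX" "BP \<in> hom C SX (Tgt C SA)" using BI BP by blast+
      qed
    qed
    have eqSC: "SC = Cmp C K2 K1"
    proof (rule coprod_uniq[OF cat cC0 OC1 SCh cat_comp[OF cat K1(1) K2(1)]], intro ballI)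
      fix k assume k: "k \<in> I"
      have "Cmp C SC (arr_c0 (iC k)) = Cmp C (arr_c1 (iC k)) (c k)" using iCc[OF k] .
      also have "\<dots> = Cmp C (arr_c1 (iC k)) (Cmp C (cc2 k) (cc1 k))" using ck[OF k] by simp
      also have "\<dots> = Cmp C (Cmp C (arr_c1 (iC k)) (cc2 k)) (cc1 k)"
        using cat_assoc[OF cat c1h[OF k] c2h[OF k] iC1[OF k]] by simp
      also have "\<dots> = Cmp C (Cmp C K2 (jX k)) (cc1 k)" using K2(2) k by simp
      also have "\<dots> = Cmp C K2 (Cmp C (jX k) (cc1 k))"
        using cat_assoc[OF cat c1h[OF k] jX[OF k] K2(1)] by simp
      also have "\<dots> = Cmp C K2 (Cmp C K1 (arr_c0 (iC k)))" using K1(2) k by simp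
      also have "\<dots> = Cmp C (Cmp C K2 K1) (arr_c0 (iC k))"
        using cat_assoc[OF cat iC0[OF k] K1(1) K2(1)] by simp
      finally show "Cmp C SC (arr_c0 (iC k)) = Cmp C (Cmp C K2 K1) (arr_c0 (iC k))" .
    qed
    have s1: "Cmp C BI (Idn C (Src C SB)) = Cmp C K1 (arr_c0 U)"
    proof (rule coprod_uniq[OF cat cB0 SXO cat_comp[OF cat cat_id[OF cat OB0] BI(1)]
          cat_comp[OF cat U0 K1(1)]], intro ballI)
      fix k assume k: "k \<in> I"
      have "Cmp C (Cmp C BI (Idn C (Src C SB))) (arr_c0 (iB k)) = Cmp C BI (arr_c0 (iB k))"
        using cat_idr[OF cat BI(1)] by simp
      also have "\<dots> = Cmp C (jX k) (ii k)" using BI(2) k by simp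
      also have "\<dots> = Cmp C (jX k) (Cmp C (cc1 k) (arr_c0 (u k)))" using e1[OF k] by simp
      also have "\<dots> = Cmp C (Cmp C (jX k) (cc1 k)) (arr_c0 (u k))"
        using cat_assoc[OF cat u0[OF k] c1h[OF k] jX[OF k]] by simp
      also have "\<dots> = Cmp C (Cmp C K1 (arr_c0 (iC k))) (arr_c0 (u k))" using K1(2) k by simp
      also have "\<dots> = Cmp C K1 (Cmp C (arr_c0 (iC k)) (arr_c0 (u k)))"
        using cat_assoc[OF cat u0[OF k] iC0[OF k] K1(1)] by simp
      also have "\<dots> = Cmp C K1 (Cmp C (arr_c0 U) (arr_c0 (iB k)))" using comm0[OF k] by simp
      also have "\<dots> = Cmp C (Cmp C K1 (arr_c0 U)) (arr_c0 (iB k))"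
        using cat_assoc[OF cat iB0[OF k] U0 K1(1)] by simp
      finally show "Cmp C (Cmp C BI (Idn C (Src C SB))) (arr_c0 (iB k)) =
          Cmp C (Cmp C K1 (arr_c0 U)) (arr_c0 (iB k))" .
    qed
    have s2: "Cmp C BP K1 = Cmp C SA (arr_c0 V)"
    proof (rule coprod_uniq[OF cat cC0 OA1 cat_comp[OF cat K1(1) BP(1)] cat_comp[OF cat V0 SAh]], intro ballI)
      fix k assume k: "k \<in> I"
      have "Cmp C (Cmp C BP K1) (arr_c0 (iC k)) = Cmp C BP (Cmp C K1 (arr_c0 (iC k)))"
        using cat_assoc[OF cat iC0[OF k] K1(1) BP(1)] by simp
      also have "\<dots> = Cmp C BP (Cmp C (jX k) (cc1 k))" using K1(2) k by simp
      also have "\<dots> = Cmp C (Cmp C BP (jX k)) (cc1 k)"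
        using cat_assoc[OF cat c1h[OF k] jX[OF k] BP(1)] by simp
      also have "\<dots> = Cmp C (Cmp C (arr_c1 (iA k)) (pp k)) (cc1 k)" using BP(2) k by simp
      also have "\<dots> = Cmp C (arr_c1 (iA k)) (Cmp C (pp k) (cc1 k))"
        using cat_assoc[OF cat c1h[OF k] pph[OF k] iA1[OF k]] by simp
      also have "\<dots> = Cmp C (arr_c1 (iA k)) (Cmp C (a k) (arr_c0 (v k)))" using e2[OF k] by simp
      also have "\<dots> = Cmp C (Cmp C (arr_c1 (iA k)) (a k)) (arr_c0 (v k))"
        using cat_assoc[OF cat v0[OF k] ah[OF k] iA1[OF k]] by simp
      also have "\<dots> = Cmp C (Cmp C SA (arr_c0 (iA k))) (arr_c0 (v k))" using iAc[OF k] by simp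
      also have "\<dots> = Cmp C SA (Cmp C (arr_c0 (iA k)) (arr_c0 (v k)))"
        using cat_assoc[OF cat v0[OF k] iA0[OF k] SAh] by simp
      also have "\<dots> = Cmp C SA (Cmp C (arr_c0 V) (arr_c0 (iC k)))" using comm0[OF k] by simp
      also have "\<dots> = Cmp C (Cmp C SA (arr_c0 V)) (arr_c0 (iC k))"
        using cat_assoc[OF cat iC0[OF k] V0 SAh] by simp
      finally show "Cmp C (Cmp C BP K1) (arr_c0 (iC k)) = Cmp C (Cmp C SA (arr_c0 V)) (arr_c0 (iC k))" .
    qed
    have s3: "Cmp C (arr_c1 U) SB = Cmp C K2 BI"
    proof (rule coprod_uniq[OF cat cB0 OC1 cat_comp[OF cat SBh U1] cat_comp[OF cat BI(1) K2(1)]], intro ballI)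
      fix k assume k: "k \<in> I"
      have "Cmp C (Cmp C (arr_c1 U) SB) (arr_c0 (iB k)) = Cmp C (arr_c1 U) (Cmp C SB (arr_c0 (iB k)))"
        using cat_assoc[OF cat iB0[OF k] SBh U1] by simp
      also have "\<dots> = Cmp C (arr_c1 U) (Cmp C (arr_c1 (iB k)) (b k))" using iBc[OF k] by simp
      also have "\<dots> = Cmp C (Cmp C (arr_c1 U) (arr_c1 (iB k))) (b k)"
        using cat_assoc[OF cat bh[OF k] iB1[OF k] U1] by simp
      also have "\<dots> = Cmp C (Cmp C (arr_c1 (iC k)) (arr_c1 (u k))) (b k)" using comm1[OF k] by simp
      also have "\<dots> = Cmp C (arr_c1 (iC k)) (Cmp C (arr_c1 (u k)) (b k))"
        using cat_assoc[OF cat bh[OF k] u1[OF k] iC1[OF k]] by simp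
      also have "\<dots> = Cmp C (arr_c1 (iC k)) (Cmp C (cc2 k) (ii k))" using e3[OF k] by simp
      also have "\<dots> = Cmp C (Cmp C (arr_c1 (iC k)) (cc2 k)) (ii k)"
        using cat_assoc[OF cat iih[OF k] c2h[OF k] iC1[OF k]] by simp
      also have "\<dots> = Cmp C (Cmp C K2 (jX k)) (ii k)" using K2(2) k by simp
      also have "\<dots> = Cmp C K2 (Cmp C (jX k) (ii k))"
        using cat_assoc[OF cat iih[OF k] jX[OF k] K2(1)] by simp
      also have "\<dots> = Cmp C K2 (Cmp C BI (arr_c0 (iB k)))" using BI(2) k by simp
      also have "\<dots> = Cmp C (Cmp C K2 BI) (arr_c0 (iB k))"
        using cat_assoc[OF cat iB0[OF k] BI(1) K2(1)] by simp
      finally show "Cmp C (Cmp C (arr_c1 U) SB) (arr_c0 (iB k)) = Cmp C (Cmp C K2 BI) (arr_c0 (iB k))" .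
    qed
    have s4: "Cmp C (arr_c1 V) K2 = Cmp C (Idn C (Tgt C SA)) BP"
    proof (rule coprod_uniq[OF cat cX OA1 cat_comp[OF cat K2(1) V1] cat_comp[OF cat BP(1) cat_id[OF cat OA1]]], intro ballI)
      fix k assume k: "k \<in> I"
      have "Cmp C (Cmp C (arr_c1 V) K2) (jX k) = Cmp C (arr_c1 V) (Cmp C K2 (jX k))"
        using cat_assoc[OF cat jX[OF k] K2(1) V1] by simp
      also have "\<dots> = Cmp C (arr_c1 V) (Cmp C (arr_c1 (iC k)) (cc2 k))" using K2(2) k by simp
      also have "\<dots> = Cmp C (Cmp C (arr_c1 V) (arr_c1 (iC k))) (cc2 k)"
        using cat_assoc[OF cat c2h[OF k] iC1[OF k] V1] by simp
      also have "\<dots> = Cmp C (Cmp C (arr_c1 (iA k)) (arr_c1 (v k))) (cc2 k)" using comm1[OF k] by simp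
      also have "\<dots> = Cmp C (arr_c1 (iA k)) (Cmp C (arr_c1 (v k)) (cc2 k))"
        using cat_assoc[OF cat c2h[OF k] v1[OF k] iA1[OF k]] by simp
      also have "\<dots> = Cmp C (arr_c1 (iA k)) (pp k)" using e4[OF k] by simp
      also have "\<dots> = Cmp C BP (jX k)" using BP(2) k by simp
      also have "\<dots> = Cmp C (Cmp C (Idn C (Tgt C SA)) BP) (jX k)" using cat_idl[OF cat BP(1)] by simp
      finally show "Cmp C (Cmp C (arr_c1 V) K2) (jX k) = Cmp C (Cmp C (Idn C (Tgt C SA)) BP) (jX k)" .
    qed
    have srcU: "arr_src U = SB" "arr_tgt U = SC" using Arr_homD(3,4)[OF Uh] .
    have tgtV: "arr_tgt V = SA" using Arr_homD(4)[OF Vh] .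
    have BIs: "Src C BI = Src C SB" "Tgt C BI = SX" using BI(1) unfolding hom_def by auto
    have BPs: "Src C BP = SX" "Tgt C BP = Tgt C SA" using BP(1) unfolding hom_def by auto
    have U0s: "Src C (arr_c0 U) = Src C SB" "Tgt C (arr_c0 U) = Src C SC" using U0 unfolding hom_def by auto
    have U1s: "Src C (arr_c1 U) = Tgt C SB" "Tgt C (arr_c1 U) = Tgt C SC" using U1 unfolding hom_def by auto
    have V0s: "Src C (arr_c0 V) = Src C SC" "Tgt C (arr_c0 V) = Src C SA" using V0 unfolding hom_def by auto
    have V1s: "Src C (arr_c1 V) = Tgt C SC" "Tgt C (arr_c1 V) = Tgt C SA" using V1 unfolding hom_def by auto
    show ?thesis
      unfolding is_ME_def Let_def srcU tgtV
      apply (rule exI[of _ BI], rule exI[of _ BP], rule exI[of _ K1], rule exI[of _ K2])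
      using BIP BIs BPs U0s U1s V0s V1s K1(1) K2(1) eqSC s1 s2 s3 s4 SBh SAh
        cat_id[OF cat OB0] cat_id[OF cat OA1]
      by (simp add: seq_morphism_def)
  qed
  show ?thesis unfolding is_ME_conflation_def using AE ME by blast
qed

end
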